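(* Under the setting in the context, write $A=A_1+A_2$, where $A_1$ is the block-diagonal part of $A$ with respect to the partition $\{1,\dots,n\}=\mathcal C_1\sqcup\mathcal C_2$ (so $(A_1)_{ij}=A_{ij}$ if $i,j$ lie in the same class and $0$ otherwise) and $A_2=A-A_1$ is the cross-class part. Write $$M^{-1}=\begin{pmatrix}\widetilde M_{11}&\widetilde M_{12}\\ \widetilde M_{21}&\widetilde M_{22}\end{pmatrix}$$ in block form with respect to this partition. Let $\epsilon>0$. If $\|A_2\|_1<\epsilon$, then $$\|\widetilde M_{12}\|_1<\Big(\frac{1}{c\,d_{\min}}\Big)^2\epsilon,$$ where $c=\min\{1/\lambda,\,w_0\}$, $d_{\min}=\min_i D_{ii}$, and $\|\cdot\|_1$ denotes the matrix norm induced by the vector $\ell^1$-norm (maximum absolute column sum).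
   Context: Let $n\ge1$ and let $\{1,\dots,n\}=\mathcal L\sqcup\mathcal U$ be a partition into labeled indices $\mathcal L$ and unlabeled indices $\mathcal U$. Let $A\in\mathbb R^{n\times n}$ be symmetric with nonnegative entries. Let $D$ be the diagonal matrix with $D_{ii}=\sum_jA_{ij}$, and assume $D_{ii}>0$ for all $i$. Fix $\lambda>0$ and $w_0>0$. Let $P$ be diagonal with $P_{ii}=\frac1\lambda D_{ii}$ for $i\in\mathcal L$ and $P_{ii}=w_0D_{ii}$ for $i\in\mathcal U$. Set $M=D+P-A$; it is invertible. The indices are also partitioned, independently of $\mathcal L,\mathcal U$, by their true class: $\{1,\dots,n\}=\mathcal C_1\sqcup\mathcal C_2$, where $\mathcal C_1$ is the set of positive points and $\mathcal C_2$ the set of negative points. Indices are ordered so that $\mathcal C_1$ comes first. *)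

theory Defs
  imports "HOL-Analysis.Analysis"
begin

definition degD :: "real^'n^'n \<Rightarrow> 'n \<Rightarrow> real" where
  "degD A i = (\<Sum>j\<in>UNIV. A $ i $ j)"

definition penP :: "real^'n^'n \<Rightarrow> 'n set \<Rightarrow> real \<Rightarrow> real \<Rightarrow> 'n \<Rightarrow> real" where
  "penP A L lam w0 i = (if i \<in> L then (1 / lam) * degD A i else w0 * degD A i)"

definition Mmat :: "real^'n^'n \<Rightarrow> 'n set \<Rightarrow> real \<Rightarrow> real \<Rightarrow> real^'n^'n" where
  "Mmat A L lam w0 = (\<chi> i j. (if i = j then degD A i + penP A L lam w0 i else 0) - A $ i $ j)"

definition cross_part :: "real^'n^'n \<Rightarrow> 'n set \<Rightarrow> real^'n^'n" where
  "cross_part A C1 = (\<chi> i j. if (i \<in> C1) = (j \<in> C1) then 0 else A $ i $ j)"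

text \<open>Induced l1 norm (maximum absolute column sum) of the submatrix of X with
  row index set R and column index set C (0 for an empty block).\<close>
definition block_norm1 :: "'n set \<Rightarrow> 'n set \<Rightarrow> real^'n^'n \<Rightarrow> real" where
  "block_norm1 R C X = Max (insert 0 ((\<lambda>j. \<Sum>i\<in>R. \<bar>X $ i $ j\<bar>) ` C))"

definition mat_norm1 :: "real^'n^'n \<Rightarrow> real" where
  "mat_norm1 X = block_norm1 UNIV UNIV X"

end

theory Submission
  imports Defs
begin

lemma Mmat_mult:
  "(Mmat A L lam w0 *v x) $ i = (degD A i + penP A L lam w0 i) * x$i - (\<Sum>k\<in>UNIV. A$i$k * x$k)"
  by (simp add: Mmat_def matrix_vector_mult_def left_diff_distrib sum_subtractf
        if_distrib[of "\<lambda>t. t * _"] cong: if_cong)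

lemma key:
  fixes A :: "real^'n^'n" and p :: "'n \<Rightarrow> real" and x y :: "real^'n"
  assumes sym: "\<forall>i k. A$i$k = A$k$i" and nonneg: "\<forall>i j. A $ i $ j \<ge> 0"
    and pnn: "\<forall>i. p i \<ge> 0"
    and yd: "\<forall>i. y$i = (degD A i + p i) * x$i - (\<Sum>k\<in>UNIV. A$i$k * x$k)"
  shows "(\<Sum>k\<in>S. p k * \<bar>x$k\<bar>) \<le> (\<Sum>i\<in>S. \<bar>y$i\<bar>) + (\<Sum>k\<in>-S. \<bar>x$k\<bar> * (\<Sum>i\<in>S. A$i$k))"
proof -
  have dnn: "degD A i \<ge> 0" for i unfolding degD_def using nonneg by (simp add: sum_nonneg)
  have step: "(degD A i + p i) * \<bar>x$i\<bar> \<le> \<bar>y$i\<bar> + (\<Sum>k\<in>UNIV. A$i$k * \<bar>x$k\<bar>)" for i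
  proof -
    have "(degD A i + p i) * \<bar>x$i\<bar> = \<bar>y$i + (\<Sum>k\<in>UNIV. A$i$k * x$k)\<bar>"
      using yd dnn[of i] pnn by (simp add: abs_mult)
    also have "\<dots> \<le> \<bar>y$i\<bar> + \<bar>\<Sum>k\<in>UNIV. A$i$k * x$k\<bar>" by (rule abs_triangle_ineq)
    also have "\<bar>\<Sum>k\<in>UNIV. A$i$k * x$k\<bar> \<le> (\<Sum>k\<in>UNIV. \<bar>A$i$k * x$k\<bar>)" by (rule sum_abs)
    also have "\<dots> = (\<Sum>k\<in>UNIV. A$i$k * \<bar>x$k\<bar>)" using nonneg by (simp add: abs_mult)
    finally show ?thesis by simp
  qed
  have s1: "(\<Sum>i\<in>S. (degD A i + p i) * \<bar>x$i\<bar>) \<le> (\<Sum>i\<in>S. \<bar>y$i\<bar>) + (\<Sum>i\<in>S. \<Sum>k\<in>UNIV. A$i$k * \<bar>x$k\<bar>)"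
  proof -
    have "(\<Sum>i\<in>S. (degD A i + p i) * \<bar>x$i\<bar>) \<le> (\<Sum>i\<in>S. \<bar>y$i\<bar> + (\<Sum>k\<in>UNIV. A$i$k * \<bar>x$k\<bar>))"
      by (rule sum_mono) (rule step)
    then show ?thesis by (simp add: sum.distrib)
  qed
  have "(\<Sum>i\<in>S. \<Sum>k\<in>UNIV. A$i$k * \<bar>x$k\<bar>) = (\<Sum>k\<in>UNIV. \<bar>x$k\<bar> * (\<Sum>i\<in>S. A$i$k))"
    by (subst sum.swap) (simp add: sum_distrib_left mult.commute)
  also have "\<dots> = (\<Sum>k\<in>S. \<bar>x$k\<bar> * (\<Sum>i\<in>S. A$i$k)) + (\<Sum>k\<in>-S. \<bar>x$k\<bar> * (\<Sum>i\<in>S. A$i$k))"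
    using sum.union_disjoint[of S "-S" "\<lambda>k. \<bar>x$k\<bar> * (\<Sum>i\<in>S. A$i$k)"] by (simp add: Compl_partition)
  also have "(\<Sum>k\<in>S. \<bar>x$k\<bar> * (\<Sum>i\<in>S. A$i$k)) \<le> (\<Sum>k\<in>S. \<bar>x$k\<bar> * degD A k)"
  proof (rule sum_mono)
    fix k
    have "(\<Sum>i\<in>S. A$i$k) \<le> (\<Sum>i\<in>UNIV. A$i$k)"
      using nonneg by (intro sum_mono2) auto
    also have "\<dots> = degD A k" unfolding degD_def using sym by simp
    finally show "\<bar>x$k\<bar> * (\<Sum>i\<in>S. A$i$k) \<le> \<bar>x$k\<bar> * degD A k" by (simp add: mult_left_mono)
  qed
  finally have "(\<Sum>i\<in>S. \<Sum>k\<in>UNIV. A$i$k * \<bar>x$k\<bar>) \<le> (\<Sum>k\<in>S. \<bar>x$k\<bar> * degD A k) + (\<Sum>k\<in>-S. \<bar>x$k\<bar> * (\<Sum>i\<in>S. A$i$k))"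
    by simp
  moreover have "(\<Sum>i\<in>S. (degD A i + p i) * \<bar>x$i\<bar>) = (\<Sum>k\<in>S. \<bar>x$k\<bar> * degD A k) + (\<Sum>k\<in>S. p k * \<bar>x$k\<bar>)"
    by (simp add: distrib_right sum.distrib[symmetric] algebra_simps)
  ultimately show ?thesis using s1 by linarith
qed


lemma fin_step:
  fixes g :: "'n::finite \<Rightarrow> real"
  assumes "\<And>j. j \<in> C \<Longrightarrow> g j \<le> B" "B < b" "0 < b"
  shows "Max (insert 0 (g ` C)) < b"
  using assms by (subst Max_less_iff) (auto intro: le_less_trans)

theorem lemma4p1:
  fixes A :: "real^'n^'n" and L U C1 C2 :: "'n set" and lam w0 \<epsilon> :: real
  assumes symA: "transpose A = A"
    and nonneg: "\<forall>i j. A $ i $ j \<ge> 0"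
    and degpos: "\<forall>i. degD A i > 0"
    and lam_pos: "lam > 0" and w0_pos: "w0 > 0"
    and LU: "L \<inter> U = {}" "L \<union> U = UNIV"
    and C12: "C1 \<inter> C2 = {}" "C1 \<union> C2 = UNIV"
    and eps_pos: "\<epsilon> > 0"
    and small: "mat_norm1 (cross_part A C1) < \<epsilon>"
  shows "block_norm1 C1 C2 (matrix_inv (Mmat A L lam w0))
           < (1 / (min (1 / lam) w0 * Min (range (degD A))))^2 * \<epsilon>"
proof -
  define M where "M = Mmat A L lam w0"
  define X where "X = matrix_inv M"
  define c where "c = min (1 / lam) w0"
  define dm where "dm = Min (range (degD A))"
  define cd where "cd = c * dm"
  define p where "p = penP A L lam w0"
  define N where "N = mat_norm1 (cross_part A C1)"
  have sym: "\<forall>i k. A$i$k = A$k$i"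
  proof (intro allI)
    fix i k
    have "A$i$k = (transpose A)$i$k" using symA by simp
    then show "A$i$k = A$k$i" by (simp add: transpose_def)
  qed
  have cpos: "c > 0" unfolding c_def using lam_pos w0_pos by simp
  have dmle: "dm \<le> degD A i" for i unfolding dm_def by (rule Min_le) auto
  have dmpos: "dm > 0" unfolding dm_def using degpos by (subst Min_gr_iff) auto
  have cdpos: "cd > 0" unfolding cd_def using cpos dmpos by simp
  have pge: "p i \<ge> cd" for i
  proof -
    have "cd \<le> c * degD A i" unfolding cd_def using cpos dmle[of i] by simp
    also have "\<dots> \<le> p i"
    proof -
      have d: "degD A i \<ge> 0" using degpos by (simp add: less_imp_le)
      have "min (1 / lam) w0 * degD A i \<le> (1/lam) * degD A i" by (rule mult_right_mono[OF _ d]) simp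
      moreover have "min (1 / lam) w0 * degD A i \<le> w0 * degD A i" by (rule mult_right_mono[OF _ d]) simp
      ultimately show ?thesis unfolding p_def penP_def c_def by auto
    qed
    finally show ?thesis .
  qed
  have pnn: "\<forall>i. p i \<ge> 0"
  proof
    fix i show "p i \<ge> 0" using pge[of i] cdpos by linarith
  qed
  have yd: "\<forall>i. (M *v x)$i = (degD A i + p i) * x$i - (\<Sum>k\<in>UNIV. A$i$k * x$k)" for x
    unfolding M_def p_def by (simp add: Mmat_mult)
  have key1: "cd * (\<Sum>k\<in>UNIV. \<bar>x$k\<bar>) \<le> (\<Sum>i\<in>UNIV. \<bar>(M *v x)$i\<bar>)" for x
  proof -
    have "cd * (\<Sum>k\<in>UNIV. \<bar>x$k\<bar>) = (\<Sum>k\<in>UNIV. cd * \<bar>x$k\<bar>)" by (simp add: sum_distrib_left)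
    also have "\<dots> \<le> (\<Sum>k\<in>UNIV. p k * \<bar>x$k\<bar>)"
      by (rule sum_mono) (simp add: mult_right_mono pge)
    also have "\<dots> \<le> (\<Sum>i\<in>UNIV. \<bar>(M *v x)$i\<bar>) + (\<Sum>k\<in>-UNIV. \<bar>x$k\<bar> * (\<Sum>i\<in>UNIV. A$i$k))"
      by (rule key[OF sym nonneg pnn yd])
    finally show ?thesis by simp
  qed
  have inv: "invertible M"
    unfolding invertible_left_inverse matrix_left_invertible_ker
  proof (intro allI impI)
    fix x :: "real^'n" assume "M *v x = 0"
    then have "cd * (\<Sum>k\<in>UNIV. \<bar>x$k\<bar>) \<le> 0" using key1[of x] by simp
    then have "(\<Sum>k\<in>UNIV. \<bar>x$k\<bar>) \<le> 0" using cdpos by (simp add: mult_le_0_iff)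
    then have "\<forall>k\<in>UNIV. \<bar>x$k\<bar> = 0"
      by (subst sum_nonneg_eq_0_iff[symmetric]) (auto intro: antisym sum_nonneg)
    then show "x = 0" by (simp add: vec_eq_iff)
  qed
  have MX: "M ** X = mat 1"
    using inv unfolding X_def invertible_def matrix_inv_def by (rule someI2_ex) auto
  have col: "(M *v (\<chi> k. X$k$j))$i = (if i = j then 1 else 0)" for i j
  proof -
    have "(M *v (\<chi> k. X$k$j))$i = (M ** X)$i$j"
      by (simp add: matrix_matrix_mult_def matrix_vector_mult_def)
    then show ?thesis using MX by (simp add: mat_def)
  qed
  have colsum: "(\<Sum>i\<in>UNIV. \<bar>(M *v (\<chi> k. X$k$j))$i\<bar>) = 1" for j
  proof -
    have "(\<Sum>i\<in>UNIV. \<bar>(M *v (\<chi> k. X$k$j))$i\<bar>) = (\<Sum>i\<in>UNIV. if i = j then 1 else 0)"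
      by (rule sum.cong) (simp_all add: col)
    then show ?thesis by simp
  qed
  have xbound: "(\<Sum>k\<in>UNIV. \<bar>X$k$j\<bar>) \<le> 1 / cd" for j
    using key1[of "\<chi> k. X$k$j"] colsum[of j] cdpos by (simp add: field_simps)
  have colA: "(\<Sum>i\<in>C1. A$i$k) \<le> N" if "k \<notin> C1" for k
  proof -
    have "(\<Sum>i\<in>C1. A$i$k) = (\<Sum>i\<in>UNIV. \<bar>cross_part A C1 $ i $ k\<bar>)"
    proof -
      have "(\<Sum>i\<in>UNIV. \<bar>cross_part A C1 $ i $ k\<bar>) = (\<Sum>i\<in>UNIV. if i \<in> C1 then A$i$k else 0)"
        by (rule sum.cong) (use that nonneg in \<open>auto simp: cross_part_def\<close>)
      also have "\<dots> = (\<Sum>i\<in>UNIV \<inter> C1. A$i$k)" by (rule sum.inter_restrict[symmetric]) simp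
      finally show ?thesis by simp
    qed
    also have "\<dots> \<le> N" unfolding N_def mat_norm1_def block_norm1_def
      by (rule Max_ge) auto
    finally show ?thesis .
  qed
  have Nnn: "N \<ge> 0" unfolding N_def mat_norm1_def block_norm1_def by (rule Max_ge) auto
  have N_lt: "N < \<epsilon>" using small N_def by simp
  have main: "(\<Sum>i\<in>C1. \<bar>X$i$j\<bar>) \<le> N / cd^2" if "j \<in> C2" for j
  proof -
    define x where "x = (\<chi> k. X$k$j)"
    have jn: "j \<notin> C1" using that C12 by auto
    have ysum: "(\<Sum>i\<in>C1. \<bar>(M *v x)$i\<bar>) = 0"
      unfolding x_def using jn by (simp add: col)
    have "cd * (\<Sum>k\<in>C1. \<bar>x$k\<bar>) = (\<Sum>k\<in>C1. cd * \<bar>x$k\<bar>)" by (simp add: sum_distrib_left)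
    also have "\<dots> \<le> (\<Sum>k\<in>C1. p k * \<bar>x$k\<bar>)"
      by (rule sum_mono) (simp add: mult_right_mono pge)
    also have "\<dots> \<le> (\<Sum>i\<in>C1. \<bar>(M *v x)$i\<bar>) + (\<Sum>k\<in>-C1. \<bar>x$k\<bar> * (\<Sum>i\<in>C1. A$i$k))"
      by (rule key[OF sym nonneg pnn yd])
    also have "\<dots> = (\<Sum>k\<in>-C1. \<bar>x$k\<bar> * (\<Sum>i\<in>C1. A$i$k))" using ysum by simp
    also have "\<dots> \<le> (\<Sum>k\<in>-C1. \<bar>x$k\<bar> * N)"
      by (rule sum_mono) (simp add: colA mult_left_mono)
    also have "\<dots> \<le> (\<Sum>k\<in>UNIV. \<bar>x$k\<bar> * N)"
      using Nnn by (intro sum_mono2) auto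
    also have "\<dots> = N * (\<Sum>k\<in>UNIV. \<bar>x$k\<bar>)" by (simp add: sum_distrib_left mult.commute)
    also have "\<dots> \<le> N * (1 / cd)" using xbound[of j] Nnn unfolding x_def
      by (intro mult_left_mono) simp_all
    finally have "cd * (\<Sum>k\<in>C1. \<bar>x$k\<bar>) \<le> N / cd" by simp
    then have "(\<Sum>k\<in>C1. \<bar>x$k\<bar>) \<le> N / cd / cd" using cdpos
      by (simp add: field_simps)
    then show ?thesis unfolding x_def by (simp add: power2_eq_square)
  qed
  have bound: "N / cd^2 < (1 / cd)^2 * \<epsilon>"
    using N_lt cdpos by (simp add: field_simps power2_eq_square)
  have epos2: "0 < (1 / cd)^2 * \<epsilon>" using cdpos eps_pos by simp
  have "block_norm1 C1 C2 X < (1 / cd)^2 * \<epsilon>"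
    unfolding block_norm1_def by (rule fin_step[OF _ bound epos2]) (use main in blast)
  then show ?thesis unfolding X_def M_def cd_def c_def dm_def .
qed

end
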